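(* Let $\varphi\in C^2(\overline{H^2})\cap C^\infty(H^2)$ with $\varphi\ge 0$, $\varphi\not\equiv0$, $\varphi(0,y)=0$ for all $y$, and $\varphi_{xx}+\varphi_{yy}-x^{-1}\varphi_x=0$ on $H^2$. Then the function $f=x^{-2}\varphi$ (defined on $H^2$) extends to a function in $C^0(\overline{H^2})\cap C^\infty(H^2)$, this extension satisfies $f_{xx}+f_{yy}+3x^{-1}f_x=0$ on $H^2$, and $f>0$ everywhere on $\overline{H^2}$ (including on $\{x=0\}$).
   Context: $H^2=\{(x,y)\in\mathbb{R}^2: x>0\}$ is the open right half-plane and $\overline{H^2}=\{x\ge0\}$ its closure. *)

theory Defs
  imports "HOL-Analysis.Analysis"
begin

definition pdx :: "(real \<times> real \<Rightarrow> real) \<Rightarrow> real \<times> real \<Rightarrow> real" where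
  "pdx f = (\<lambda>(x, y). deriv (\<lambda>t. f (t, y)) x)"

definition pdy :: "(real \<times> real \<Rightarrow> real) \<Rightarrow> real \<times> real \<Rightarrow> real" where
  "pdy f = (\<lambda>(x, y). deriv (\<lambda>t. f (x, t)) y)"

fun iterpd :: "bool list \<Rightarrow> (real \<times> real \<Rightarrow> real) \<Rightarrow> real \<times> real \<Rightarrow> real" where
  "iterpd [] f = f"
| "iterpd (d # ds) f = iterpd ds (if d then pdx f else pdy f)"

definition partials_exist_at :: "(real \<times> real \<Rightarrow> real) \<Rightarrow> real \<times> real \<Rightarrow> bool" where
  "partials_exist_at g p \<longleftrightarrow>
     (\<lambda>t. g (t, snd p)) differentiable (at (fst p)) \<and>
     (\<lambda>t. g (fst p, t)) differentiable (at (snd p))"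

definition Ck_on :: "nat \<Rightarrow> (real \<times> real) set \<Rightarrow> (real \<times> real \<Rightarrow> real) \<Rightarrow> bool" where
  "Ck_on k U f \<longleftrightarrow>
     (\<forall>ds. length ds \<le> k \<longrightarrow> continuous_on U (iterpd ds f)) \<and>
     (\<forall>ds. length ds < k \<longrightarrow> (\<forall>p\<in>U. partials_exist_at (iterpd ds f) p))"

definition Cinf_on :: "(real \<times> real) set \<Rightarrow> (real \<times> real \<Rightarrow> real) \<Rightarrow> bool" where
  "Cinf_on U f \<longleftrightarrow> (\<forall>k. Ck_on k U f)"

definition Ck_closure :: "nat \<Rightarrow> (real \<times> real) set \<Rightarrow> (real \<times> real \<Rightarrow> real) \<Rightarrow> bool" where
  "Ck_closure k U f \<longleftrightarrow> Ck_on k U f \<and> continuous_on (closure U) f \<and>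
     (\<forall>ds. length ds \<le> k \<longrightarrow>
        (\<exists>g. continuous_on (closure U) g \<and> (\<forall>p\<in>U. g p = iterpd ds f p)))"

definition H2 :: "(real \<times> real) set" where
  "H2 = {p. fst p > 0}"

definition H2bar :: "(real \<times> real) set" where
  "H2bar = {p. fst p \<ge> 0}"

end

theory Submission
  imports Defs
begin



lemma partials_D:
  assumes "partials_exist_at F p"
  shows "((\<lambda>t. F (t, snd p)) has_real_derivative pdx F p) (at (fst p))"
    and "((\<lambda>t. F (fst p, t)) has_real_derivative pdy F p) (at (snd p))"
  using assms unfolding partials_exist_at_def pdx_def pdy_def
  by (auto simp: case_prod_beta DERIV_deriv_iff_real_differentiable)

lemma ev_line_x:
  assumes "open U" "(x, y) \<in> U"
  shows "eventually (\<lambda>t. (t, y) \<in> U) (nhds x)"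
proof -
  have "((\<lambda>t. (t, y)) \<longlongrightarrow> (x, y)) (nhds x)"
    by (intro tendsto_intros) (simp add: filterlim_ident)
  from topological_tendstoD[OF this assms] show ?thesis .
qed

lemma ev_line_y:
  assumes "open U" "(x, y) \<in> U"
  shows "eventually (\<lambda>t. (x, t) \<in> U) (nhds y)"
proof -
  have "((\<lambda>t. (x, t)) \<longlongrightarrow> (x, y)) (nhds y)"
    by (intro tendsto_intros) (simp add: filterlim_ident)
  from topological_tendstoD[OF this assms] show ?thesis .
qed

lemma pd_cong:
  assumes "open U" "\<forall>p\<in>U. F p = G p" "p \<in> U"
  shows "pdx F p = pdx G p" "pdy F p = pdy G p"
proof -
  obtain x y where p: "p = (x, y)" by fastforce
  have "eventually (\<lambda>t. (t, y) \<in> U) (nhds x)"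
    using ev_line_x[OF assms(1)] assms(3) p by auto
  then have "eventually (\<lambda>t. F (t, y) = G (t, y)) (nhds x)"
    by (rule eventually_mono) (use assms(2) in auto)
  then show "pdx F p = pdx G p" unfolding pdx_def p by (simp add: deriv_cong_ev)
  have "eventually (\<lambda>t. (x, t) \<in> U) (nhds y)"
    using ev_line_y[OF assms(1)] assms(3) p by auto
  then have "eventually (\<lambda>t. F (x, t) = G (x, t)) (nhds y)"
    by (rule eventually_mono) (use assms(2) in auto)
  then show "pdy F p = pdy G p" unfolding pdy_def p by (simp add: deriv_cong_ev)
qed

lemma iterpd_cong:
  assumes "open U" "\<forall>p\<in>U. F p = G p"
  shows "\<forall>p\<in>U. iterpd ds F p = iterpd ds G p"
  using assms(2)
proof (induction ds arbitrary: F G)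
  case Nil then show ?case by simp
next
  case (Cons d ds)
  have "\<forall>p\<in>U. (if d then pdx F else pdy F) p = (if d then pdx G else pdy G) p"
    using pd_cong[OF assms(1) Cons.prems] by auto
  from Cons.IH[OF this] show ?case by simp
qed

lemma partials_cong:
  assumes "open U" "\<forall>p\<in>U. F p = G p" "p \<in> U"
  shows "partials_exist_at F p \<longleftrightarrow> partials_exist_at G p"
proof -
  obtain x y where p: "p = (x, y)" by fastforce
  have "eventually (\<lambda>t. (t, y) \<in> U) (nhds x)"
    using ev_line_x[OF assms(1)] assms(3) p by auto
  then have 1: "eventually (\<lambda>t. F (t, y) = G (t, y)) (nhds x)"
    by (rule eventually_mono) (use assms(2) in auto)
  have "eventually (\<lambda>t. (x, t) \<in> U) (nhds y)"
    using ev_line_y[OF assms(1)] assms(3) p by auto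
  then have 2: "eventually (\<lambda>t. F (x, t) = G (x, t)) (nhds y)"
    by (rule eventually_mono) (use assms(2) in auto)
  show ?thesis unfolding partials_exist_at_def p
    using DERIV_cong_ev[OF refl 1 refl] DERIV_cong_ev[OF refl 2 refl]
    by (simp add: DERIV_deriv_iff_real_differentiable[symmetric] deriv_cong_ev[OF 1 refl] deriv_cong_ev[OF 2 refl])
qed

lemma Ck_cong:
  assumes "open U" "\<forall>p\<in>U. F p = G p"
  shows "Ck_on k U F \<longleftrightarrow> Ck_on k U G"
proof -
  have "\<And>ds. continuous_on U (iterpd ds F) \<longleftrightarrow> continuous_on U (iterpd ds G)"
    using iterpd_cong[OF assms] by (intro continuous_on_cong) auto
  moreover have "\<And>ds p. p \<in> U \<Longrightarrow> partials_exist_at (iterpd ds F) p \<longleftrightarrow> partials_exist_at (iterpd ds G) p"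
    using iterpd_cong[OF assms] by (intro partials_cong[OF assms(1)]) auto
  ultimately show ?thesis unfolding Ck_on_def by auto
qed

lemma Ck_Suc:
  "Ck_on (Suc k) U F \<longleftrightarrow> continuous_on U F \<and> (\<forall>p\<in>U. partials_exist_at F p)
     \<and> Ck_on k U (pdx F) \<and> Ck_on k U (pdy F)"
proof
  assume H: "Ck_on (Suc k) U F"
  have c: "\<And>ds. length ds \<le> Suc k \<Longrightarrow> continuous_on U (iterpd ds F)"
    and p: "\<And>ds. length ds < Suc k \<Longrightarrow> \<forall>p\<in>U. partials_exist_at (iterpd ds F) p"
    using H unfolding Ck_on_def by auto
  have "continuous_on U F" using c[of "[]"] by simp
  moreover have "\<forall>p\<in>U. partials_exist_at F p" using p[of "[]"] by simp
  moreover have "Ck_on k U (pdx F)" unfolding Ck_on_def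
    using c[of "True # _"] p[of "True # _"] by simp
  moreover have "Ck_on k U (pdy F)" unfolding Ck_on_def
    using c[of "False # _"] p[of "False # _"] by simp
  ultimately show "continuous_on U F \<and> (\<forall>p\<in>U. partials_exist_at F p) \<and> Ck_on k U (pdx F) \<and> Ck_on k U (pdy F)" by simp
next
  assume H: "continuous_on U F \<and> (\<forall>p\<in>U. partials_exist_at F p) \<and> Ck_on k U (pdx F) \<and> Ck_on k U (pdy F)"
  show "Ck_on (Suc k) U F" unfolding Ck_on_def
  proof (intro conjI allI impI)
    fix ds :: "bool list" assume "length ds \<le> Suc k"
    then show "continuous_on U (iterpd ds F)" using H unfolding Ck_on_def
      by (cases ds) auto
  next
    fix ds :: "bool list" assume "length ds < Suc k"
    then show "\<forall>p\<in>U. partials_exist_at (iterpd ds F) p" using H unfolding Ck_on_def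
      by (cases ds) auto
  qed
qed

lemma Ck_0: "Ck_on 0 U F \<longleftrightarrow> continuous_on U F"
  unfolding Ck_on_def by auto

lemma Ck_mono: "Ck_on (Suc k) U F \<Longrightarrow> Ck_on k U F"
  unfolding Ck_on_def by auto

lemma Ck_add:
  assumes "open U" shows "Ck_on k U F \<Longrightarrow> Ck_on k U G \<Longrightarrow> Ck_on k U (\<lambda>p. F p + G p)"
proof (induction k arbitrary: F G)
  case 0 then show ?case by (auto simp: Ck_0 intro: continuous_on_add)
next
  case (Suc k)
  have pe: "\<forall>p\<in>U. partials_exist_at (\<lambda>p. F p + G p) p"
    using Suc.prems unfolding Ck_Suc partials_exist_at_def by auto
  have "\<forall>p\<in>U. pdx (\<lambda>p. F p + G p) p = pdx F p + pdx G p \<and> pdy (\<lambda>p. F p + G p) p = pdy F p + pdy G p"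
  proof
    fix p assume "p \<in> U"
    then have "partials_exist_at F p" "partials_exist_at G p" using Suc.prems unfolding Ck_Suc by auto
    from partials_D[OF this(1)] partials_D[OF this(2)]
    have "((\<lambda>t. F (t, snd p) + G (t, snd p)) has_real_derivative pdx F p + pdx G p) (at (fst p))"
         "((\<lambda>t. F (fst p, t) + G (fst p, t)) has_real_derivative pdy F p + pdy G p) (at (snd p))"
      by (auto intro: DERIV_add)
    then show "pdx (\<lambda>p. F p + G p) p = pdx F p + pdx G p \<and> pdy (\<lambda>p. F p + G p) p = pdy F p + pdy G p"
      unfolding pdx_def pdy_def by (auto simp: case_prod_beta DERIV_imp_deriv)
  qed
  then have e1: "Ck_on k U (pdx (\<lambda>p. F p + G p)) = Ck_on k U (\<lambda>p. pdx F p + pdx G p)"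
    and e2: "Ck_on k U (pdy (\<lambda>p. F p + G p)) = Ck_on k U (\<lambda>p. pdy F p + pdy G p)"
    by (auto intro!: Ck_cong[OF assms])
  show ?case unfolding Ck_Suc e1 e2 using Suc pe unfolding Ck_Suc
    by (auto intro: continuous_on_add)
qed

lemma Ck_mult:
  assumes "open U" shows "Ck_on k U F \<Longrightarrow> Ck_on k U G \<Longrightarrow> Ck_on k U (\<lambda>p. F p * G p)"
proof (induction k arbitrary: F G)
  case 0 then show ?case by (auto simp: Ck_0 intro: continuous_on_mult)
next
  case (Suc k)
  have pe: "\<forall>p\<in>U. partials_exist_at (\<lambda>p. F p * G p) p"
    using Suc.prems unfolding Ck_Suc partials_exist_at_def by auto
  have "\<forall>p\<in>U. pdx (\<lambda>p. F p * G p) p = pdx F p * G p + F p * pdx G p \<and> pdy (\<lambda>p. F p * G p) p = pdy F p * G p + F p * pdy G p"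
  proof
    fix p assume "p \<in> U"
    then have "partials_exist_at F p" "partials_exist_at G p" using Suc.prems unfolding Ck_Suc by auto
    from partials_D[OF this(1)] partials_D[OF this(2)]
    have "((\<lambda>t. F (t, snd p) * G (t, snd p)) has_real_derivative pdx F p * G p + F p * pdx G p) (at (fst p))"
         "((\<lambda>t. F (fst p, t) * G (fst p, t)) has_real_derivative pdy F p * G p + F p * pdy G p) (at (snd p))"
      by (auto intro!: derivative_eq_intros)
    then show "pdx (\<lambda>p. F p * G p) p = pdx F p * G p + F p * pdx G p \<and> pdy (\<lambda>p. F p * G p) p = pdy F p * G p + F p * pdy G p"
      unfolding pdx_def pdy_def by (auto simp: case_prod_beta DERIV_imp_deriv)
  qed
  then have e1: "Ck_on k U (pdx (\<lambda>p. F p * G p)) = Ck_on k U (\<lambda>p. pdx F p * G p + F p * pdx G p)"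
    and e2: "Ck_on k U (pdy (\<lambda>p. F p * G p)) = Ck_on k U (\<lambda>p. pdy F p * G p + F p * pdy G p)"
    by (auto intro!: Ck_cong[OF assms])
  have F: "Ck_on k U F" "Ck_on k U (pdx F)" "Ck_on k U (pdy F)" "continuous_on U F"
    and G: "Ck_on k U G" "Ck_on k U (pdx G)" "Ck_on k U (pdy G)" "continuous_on U G"
    using Suc.prems Ck_mono unfolding Ck_Suc by blast+
  have "Ck_on k U (\<lambda>p. pdx F p * G p + F p * pdx G p)"
    by (rule Ck_add[OF assms Suc.IH[OF F(2) G(1)] Suc.IH[OF F(1) G(2)]])
  moreover have "Ck_on k U (\<lambda>p. pdy F p * G p + F p * pdy G p)"
    by (rule Ck_add[OF assms Suc.IH[OF F(3) G(1)] Suc.IH[OF F(1) G(3)]])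
  moreover have "continuous_on U (\<lambda>p. F p * G p)" using F G by (intro continuous_on_mult)
  ultimately show ?case unfolding Ck_Suc e1 e2 using pe by blast
qed




lemma open_H2: "open H2"
  unfolding H2_def by (intro open_Collect_less continuous_intros)

lemma closure_H2: "closure H2 = H2bar"
proof -
  have "H2 = {p. (1::real, 0::real) \<bullet> p > 0}" unfolding H2_def
    by (auto simp: inner_prod_def)
  moreover have "H2bar = {p. (1::real, 0::real) \<bullet> p \<ge> 0}" unfolding H2bar_def
    by (auto simp: inner_prod_def)
  moreover have "closure {p. (1::real, 0::real) \<bullet> p > 0} = {p. (1::real, 0::real) \<bullet> p \<ge> 0}"
    by (rule closure_halfspace_gt) (simp add: zero_prod_def)
  ultimately show ?thesis by simp
qed

lemma deriv_invpow:
  fixes x c :: real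
  assumes "x \<noteq> 0"
  shows "((\<lambda>t. c / t ^ n) has_real_derivative (- (real n * c) / x ^ Suc n)) (at x)"
proof (induction n)
  case 0 then show ?case by (auto intro!: derivative_eq_intros)
next
  case (Suc n)
  have d1: "((\<lambda>t. 1 / t) has_real_derivative (- 1 / x ^ 2)) (at x)"
    using assms by (auto intro!: derivative_eq_intros simp: power2_eq_square)
  have "((\<lambda>t. (c / t ^ n) * (1 / t)) has_real_derivative
      (- (real n * c) / x ^ Suc n) * (1 / x) + (c / x ^ n) * (- 1 / x ^ 2)) (at x)"
    using DERIV_mult[OF Suc.IH d1] by (simp add: mult.commute)
  moreover have "(- (real n * c) / x ^ Suc n) * (1 / x) + (c / x ^ n) * (- 1 / x ^ 2)
     = - (real (Suc n) * c) / x ^ Suc (Suc n)"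
    using assms by (simp add: field_simps power_Suc power2_eq_square)
  moreover have "(\<lambda>t. (c / t ^ n) * (1 / t)) = (\<lambda>t. c / t ^ Suc n)"
    by (auto simp: power_Suc field_simps)
  ultimately show ?case by simp
qed

lemma Ck_invpow: "Ck_on k H2 (\<lambda>p. c / (fst p) ^ n)"
proof (induction k arbitrary: n c)
  case 0 then show ?case
    by (auto simp: Ck_0 H2_def intro!: continuous_intros)
next
  case (Suc k)
  have cont: "continuous_on H2 (\<lambda>p. c / (fst p) ^ n)"
    by (auto simp: H2_def intro!: continuous_intros)
  have pe: "\<forall>p\<in>H2. partials_exist_at (\<lambda>p. c / (fst p) ^ n) p"
    unfolding partials_exist_at_def H2_def
  proof (intro ballI conjI)
    fix p :: "real \<times> real" assume "p \<in> {p. 0 < fst p}"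
    then show "(\<lambda>t. c / (fst (t, snd p)) ^ n) differentiable at (fst p)"
      using deriv_invpow[of "fst p" c n] by (auto simp: real_differentiable_def)
  qed simp
  have "\<forall>p\<in>H2. pdx (\<lambda>p. c / (fst p) ^ n) p = (- (real n * c)) / (fst p) ^ Suc n"
    unfolding pdx_def H2_def using deriv_invpow
    by (auto simp: DERIV_imp_deriv)
  then have e1: "Ck_on k H2 (pdx (\<lambda>p. c / (fst p) ^ n)) = Ck_on k H2 (\<lambda>p. (- (real n * c)) / (fst p) ^ Suc n)"
    by (rule Ck_cong[OF open_H2])
  have "\<forall>p\<in>H2. pdy (\<lambda>p. c / (fst p) ^ n) p = 0 / (fst p) ^ 0"
    unfolding pdy_def by (auto simp: DERIV_imp_deriv)
  then have e2: "Ck_on k H2 (pdy (\<lambda>p. c / (fst p) ^ n)) = Ck_on k H2 (\<lambda>p. 0 / (fst p) ^ 0)"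
    by (rule Ck_cong[OF open_H2])
  show ?case unfolding Ck_Suc e1 e2 using cont pe Suc.IH by blast
qed

lemma second_deriv_min:
  fixes h h1 :: "real \<Rightarrow> real"
  assumes e: "e > 0"
    and d1: "\<And>t. \<bar>t - a\<bar> < e \<Longrightarrow> (h has_real_derivative h1 t) (at t)"
    and d2: "(h1 has_real_derivative c) (at a)"
    and mn: "\<And>t. \<bar>t - a\<bar> < e \<Longrightarrow> h a \<le> h t"
  shows "h1 a = 0 \<and> c \<ge> 0"
proof -
  have h0: "h1 a = 0"
    by (rule DERIV_local_min[OF d1[of a] e]) (use e mn in \<open>auto simp: abs_minus_commute\<close>)
  have "c \<ge> 0"
  proof (rule ccontr)
    assume "\<not> c \<ge> 0"
    then have "c < 0" by simp
    from DERIV_neg_dec_right[OF d2 this] obtain d where d: "d > 0"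
      "\<And>s. s > 0 \<Longrightarrow> s < d \<Longrightarrow> h1 (a + s) < h1 a" by blast
    define s where "s = min d e / 2"
    have s: "s > 0" "s < d" "s < e" using d e by (auto simp: s_def)
    have "\<exists>z. a < z \<and> z < a + s \<and> h (a + s) - h a = ((a + s) - a) * h1 z"
      by (rule MVT2) (use s in \<open>auto intro!: d1\<close>)
    then obtain z where z: "a < z" "z < a + s" "h (a + s) - h a = s * h1 z" by auto
    have "h1 z < 0" using d(2)[of "z - a"] z s h0 by auto
    then have "s * h1 z < 0" using s(1) by (simp add: mult_pos_neg)
    then have "h (a + s) < h a" using z by linarith
    moreover have "h a \<le> h (a + s)" using mn[of "a + s"] s by auto
    ultimately show False by simp
  qed
  with h0 show ?thesis by simp
qed




lemma dist_line_x: "dist (t, y) (x, y) = \<bar>t - x\<bar>"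
  by (simp add: dist_Pair_Pair dist_real_def)
lemma dist_line_y: "dist (x, t) (x, y) = \<bar>t - y\<bar>"
  by (simp add: dist_Pair_Pair dist_real_def)

lemma minprinc:
  fixes g gx gxx gy gyy :: "real \<times> real \<Rightarrow> real" and K :: "(real \<times> real) set"
  assumes K: "compact K"
    and cont: "continuous_on K g"
    and bd: "\<And>p. p \<in> K \<Longrightarrow> fst p > 0 \<Longrightarrow> p \<notin> interior K \<Longrightarrow> g p \<ge> 0"
    and der: "\<And>p. p \<in> interior K \<Longrightarrow> fst p > 0 \<Longrightarrow>
        ((\<lambda>t. g (t, snd p)) has_real_derivative gx p) (at (fst p)) \<and>
        ((\<lambda>t. gx (t, snd p)) has_real_derivative gxx p) (at (fst p)) \<and>
        ((\<lambda>t. g (fst p, t)) has_real_derivative gy p) (at (snd p)) \<and>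
        ((\<lambda>t. gy (fst p, t)) has_real_derivative gyy p) (at (snd p)) \<and>
        gxx p + gyy p + 3 * gx p / fst p < 0"
    and p0: "p0 \<in> K" "fst p0 > 0"
  shows "g p0 \<ge> 0"
proof (rule ccontr)
  assume "\<not> g p0 \<ge> 0"
  hence neg: "g p0 < 0" by simp
  define x0 where "x0 = fst p0"
  have x0: "x0 > 0" using p0 by (simp add: x0_def)
  have "compact (g ` K)" by (rule compact_continuous_image[OF cont K])
  then have "bounded (g ` K)" by (rule compact_imp_bounded)
  then obtain B where B0': "\<forall>v\<in>g ` K. norm v \<le> B" unfolding bounded_iff by blast
  have B: "\<And>p. p \<in> K \<Longrightarrow> \<bar>g p\<bar> \<le> B" using B0' by auto
  have B0: "B \<ge> 0" using B[OF p0(1)] by simp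
  define \<epsilon> where "\<epsilon> = - g p0 * x0 ^ 2 / 2"
  have \<epsilon>: "\<epsilon> > 0" using neg x0 by (simp add: \<epsilon>_def mult_neg_pos)
  define \<delta> where "\<delta> = min (x0 / 2) (sqrt (\<epsilon> / (B + 1)))"
  have \<delta>: "\<delta> > 0" "\<delta> < x0" using x0 \<epsilon> B0 by (auto simp: \<delta>_def)
  have "\<delta> ^ 2 \<le> \<epsilon> / (B + 1)"
  proof -
    have "\<delta> \<le> sqrt (\<epsilon> / (B + 1))" by (simp add: \<delta>_def)
    then have "\<delta> ^ 2 \<le> (sqrt (\<epsilon> / (B + 1))) ^ 2" using \<delta> by (intro power_mono) auto
    also have "\<dots> = \<epsilon> / (B + 1)" using \<epsilon> B0 by simp
    finally show ?thesis .
  qed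
  then have big: "\<epsilon> / \<delta> ^ 2 \<ge> B + 1" using \<delta> B0 by (simp add: field_simps)
  define K' where "K' = K \<inter> {p. fst p \<ge> \<delta>}"
  have cK': "compact K'" unfolding K'_def
    by (intro compact_Int_closed K closed_Collect_le continuous_intros)
  define h where "h p = g p + \<epsilon> / (fst p) ^ 2" for p
  have ch: "continuous_on K' h" unfolding h_def
    using \<delta> by (intro continuous_intros continuous_on_subset[OF cont]) (auto simp: K'_def)
  have p0K': "p0 \<in> K'" using p0 \<delta> by (auto simp: K'_def x0_def)
  obtain p where pK': "p \<in> K'" and pmin: "\<And>z. z \<in> K' \<Longrightarrow> h p \<le> h z"
    using continuous_attains_inf[OF cK' _ ch] p0K' by blast
  have "h p0 = g p0 / 2" using x0 by (simp add: h_def \<epsilon>_def x0_def field_simps)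
  then have hp: "h p < 0" using pmin[OF p0K'] neg by simp
  have pK: "p \<in> K" and pd: "fst p \<ge> \<delta>" using pK' by (auto simp: K'_def)
  have px: "fst p > 0" using pd \<delta> by simp
  have "\<epsilon> / (fst p) ^ 2 > 0" using \<epsilon> px by simp
  then have gp: "g p < 0" using hp by (simp add: h_def)
  then have pint: "p \<in> interior K" using bd[OF pK px] by force
  have "fst p \<noteq> \<delta>"
  proof
    assume "fst p = \<delta>"
    then have "h p = g p + \<epsilon> / \<delta> ^ 2" by (simp add: h_def)
    moreover have "g p \<ge> - B" using B[OF pK] by simp
    ultimately have "h p \<ge> 1" using big by simp
    with hp show False by simp
  qed
  with pd have pd': "fst p > \<delta>" by simp
  obtain e where e: "e > 0" "ball p e \<subseteq> interior K"
    using open_contains_ball pint open_interior by blast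
  define e' where "e' = min e (fst p - \<delta>)"
  have e': "e' > 0" using e pd' by (simp add: e'_def)
  have inball: "z \<in> interior K \<and> fst z > \<delta> \<and> z \<in> K' \<and> h p \<le> h z" if "dist z p < e'" for z
  proof -
    have "z \<in> ball p e" using that by (simp add: e'_def dist_commute)
    then have zi: "z \<in> interior K" using e by auto
    have "\<bar>fst z - fst p\<bar> \<le> dist z p"
      by (metis dist_fst_le dist_real_def)
    then have zf: "fst z > \<delta>" using that unfolding e'_def by linarith
    then have "z \<in> K'" using zi interior_subset by (auto simp: K'_def)
    then show ?thesis using zi zf pmin by blast
  qed
  obtain x y where pxy: "p = (x, y)" by fastforce
  have xpos: "x > 0" using px pxy by simp
  have dx: "((\<lambda>s. h (s, y)) has_real_derivative (gx (t, y) - 2 * \<epsilon> / t ^ 3)) (at t)"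
    if "\<bar>t - x\<bar> < e'" for t
  proof -
    have "dist (t, y) p < e'" using that pxy by (simp add: dist_line_x)
    from inball[OF this] have "(t, y) \<in> interior K" "t > \<delta>" by auto
    from der[OF this(1)] this(2) \<delta> have "((\<lambda>s. g (s, y)) has_real_derivative gx (t, y)) (at t)" by simp
    moreover have "((\<lambda>s. \<epsilon> / s ^ 2) has_real_derivative (- (real 2 * \<epsilon>) / t ^ Suc 2)) (at t)"
      using deriv_invpow[of t \<epsilon> 2] \<open>t > \<delta>\<close> \<delta> by simp
    ultimately have "((\<lambda>s. g (s, y) + \<epsilon> / s ^ 2) has_real_derivative (gx (t, y) + (- (real 2 * \<epsilon>) / t ^ Suc 2))) (at t)"
      by (rule DERIV_add)
    then show ?thesis unfolding h_def by simp
  qed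
  have dxx: "((\<lambda>s. gx (s, y) - 2 * \<epsilon> / s ^ 3) has_real_derivative (gxx p + 6 * \<epsilon> / x ^ 4)) (at x)"
  proof -
    from der[OF pint px] have "((\<lambda>s. gx (s, y)) has_real_derivative gxx p) (at x)" using pxy by simp
    moreover have "((\<lambda>s. (- 2 * \<epsilon>) / s ^ 3) has_real_derivative (- (real 3 * (- 2 * \<epsilon>)) / x ^ Suc 3)) (at x)"
      using deriv_invpow[of x "- 2 * \<epsilon>" 3] xpos by simp
    ultimately have "((\<lambda>s. gx (s, y) + (- 2 * \<epsilon>) / s ^ 3) has_real_derivative (gxx p + (- (real 3 * (- 2 * \<epsilon>)) / x ^ Suc 3))) (at x)"
      by (rule DERIV_add)
    then show ?thesis by (simp add: field_simps)
  qed
  have mx: "h (x, y) \<le> h (t, y)" if "\<bar>t - x\<bar> < e'" for t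
    using inball[of "(t, y)"] that pxy by (simp add: dist_line_x)
  from second_deriv_min[OF e' dx dxx mx]
  have rx: "gx (x, y) = 2 * \<epsilon> / x ^ 3" "gxx p + 6 * \<epsilon> / x ^ 4 \<ge> 0" by auto
  have dy: "((\<lambda>s. h (x, s)) has_real_derivative gy (x, t)) (at t)"
    if "\<bar>t - y\<bar> < e'" for t
  proof -
    have "dist (x, t) p < e'" using that pxy by (simp add: dist_line_y)
    from inball[OF this] have "(x, t) \<in> interior K" by auto
    from der[OF this] xpos have "((\<lambda>s. g (x, s)) has_real_derivative gy (x, t)) (at t)" by simp
    then show ?thesis unfolding h_def by (auto intro!: derivative_eq_intros)
  qed
  have dyy: "((\<lambda>s. gy (x, s)) has_real_derivative gyy p) (at y)"
    using der[OF pint px] pxy by simp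
  have my: "h (x, y) \<le> h (x, t)" if "\<bar>t - y\<bar> < e'" for t
    using inball[of "(x, t)"] that pxy by (simp add: dist_line_y)
  from second_deriv_min[OF e' dy dyy my] have ry: "gyy p \<ge> 0" by auto
  have "gxx p + gyy p + 3 * gx p / fst p \<ge> 0"
  proof -
    have "3 * gx p / fst p = 3 * (2 * \<epsilon> / x ^ 3) / x" using rx(1) pxy by simp
    also have "\<dots> = 6 * \<epsilon> / x ^ 4" using xpos by (simp add: field_simps eval_nat_numeral)
    finally have "3 * gx p / fst p = 6 * \<epsilon> / x ^ 4" .
    then show ?thesis using rx(2) ry by simp
  qed
  with der[OF pint px] show False by simp
qed




lemma C2_derivs:
  assumes "Ck_on 2 H2 F" "x > 0"
  shows "((\<lambda>t. F (t, y)) has_real_derivative pdx F (x, y)) (at x)"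
    and "((\<lambda>t. pdx F (t, y)) has_real_derivative pdx (pdx F) (x, y)) (at x)"
    and "((\<lambda>t. F (x, t)) has_real_derivative pdy F (x, y)) (at y)"
    and "((\<lambda>t. pdy F (x, t)) has_real_derivative pdy (pdy F) (x, y)) (at y)"
proof -
  have H: "(x, y) \<in> H2" using assms(2) by (simp add: H2_def)
  have P: "\<And>ds. length ds < 2 \<Longrightarrow> partials_exist_at (iterpd ds F) (x, y)"
    using assms(1) H unfolding Ck_on_def by blast
  from partials_D[OF P[of "[]"]] show "((\<lambda>t. F (t, y)) has_real_derivative pdx F (x, y)) (at x)"
     "((\<lambda>t. F (x, t)) has_real_derivative pdy F (x, y)) (at y)" by auto
  from partials_D[OF P[of "[True]"]] show "((\<lambda>t. pdx F (t, y)) has_real_derivative pdx (pdx F) (x, y)) (at x)" by auto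
  from partials_D[OF P[of "[False]"]] show "((\<lambda>t. pdy F (x, t)) has_real_derivative pdy (pdy F) (x, y)) (at y)" by auto
qed

lemma f_derivs:
  assumes C: "Ck_on 2 H2 \<phi>" and fe: "\<forall>p\<in>H2. f p = \<phi> p / (fst p) ^ 2" and x: "x > 0"
  shows "pdx f (x, y) = pdx \<phi> (x, y) / x ^ 2 - 2 * \<phi> (x, y) / x ^ 3"
    and "pdy f (x, y) = pdy \<phi> (x, y) / x ^ 2"
    and "pdx (pdx f) (x, y) = pdx (pdx \<phi>) (x, y) / x ^ 2 - 4 * pdx \<phi> (x, y) / x ^ 3 + 6 * \<phi> (x, y) / x ^ 4"
    and "pdy (pdy f) (x, y) = pdy (pdy \<phi>) (x, y) / x ^ 2"
proof -
  have A: "pdx f (t, y) = pdx \<phi> (t, y) / t ^ 2 - 2 * \<phi> (t, y) / t ^ 3" if t: "t > 0" for t y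
  proof -
    have "((\<lambda>s. \<phi> (s, y) / s ^ 2) has_real_derivative (pdx \<phi> (t, y) / t ^ 2 - 2 * \<phi> (t, y) / t ^ 3)) (at t)"
      using C2_derivs(1)[OF C t, of y] t
      by (auto intro!: derivative_eq_intros simp: field_simps eval_nat_numeral)
    then have "((\<lambda>s. f (s, y)) has_real_derivative (pdx \<phi> (t, y) / t ^ 2 - 2 * \<phi> (t, y) / t ^ 3)) (at t)"
      by (rule has_field_derivative_transform_within_open[where S = "{0<..}"]) (use t fe in \<open>auto simp: H2_def\<close>)
    then show ?thesis unfolding pdx_def by (simp add: DERIV_imp_deriv)
  qed
  then show "pdx f (x, y) = pdx \<phi> (x, y) / x ^ 2 - 2 * \<phi> (x, y) / x ^ 3" using x by simp
  have B: "pdy f (x, t) = pdy \<phi> (x, t) / x ^ 2" for t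
  proof -
    have "((\<lambda>s. \<phi> (x, s) / x ^ 2) has_real_derivative (pdy \<phi> (x, t) / x ^ 2)) (at t)"
      using DERIV_cdivide[OF C2_derivs(3)[OF C x, of t], of "x ^ 2"] by simp
    moreover have "(\<lambda>s. \<phi> (x, s) / x ^ 2) = (\<lambda>s. f (x, s))" using fe x by (auto simp: H2_def)
    ultimately show ?thesis unfolding pdy_def by (simp add: DERIV_imp_deriv)
  qed
  then show "pdy f (x, y) = pdy \<phi> (x, y) / x ^ 2" .
  have "((\<lambda>s. pdx \<phi> (s, y) / s ^ 2 - 2 * \<phi> (s, y) / s ^ 3) has_real_derivative
      (pdx (pdx \<phi>) (x, y) / x ^ 2 - 4 * pdx \<phi> (x, y) / x ^ 3 + 6 * \<phi> (x, y) / x ^ 4)) (at x)"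
    using C2_derivs(1,2)[OF C x, of y] x
    by (auto intro!: derivative_eq_intros simp: field_simps eval_nat_numeral)
  then have "((\<lambda>s. pdx f (s, y)) has_real_derivative
      (pdx (pdx \<phi>) (x, y) / x ^ 2 - 4 * pdx \<phi> (x, y) / x ^ 3 + 6 * \<phi> (x, y) / x ^ 4)) (at x)"
    by (rule has_field_derivative_transform_within_open[where S = "{0<..}"]) (use x A in auto)
  then show "pdx (pdx f) (x, y) = pdx (pdx \<phi>) (x, y) / x ^ 2 - 4 * pdx \<phi> (x, y) / x ^ 3 + 6 * \<phi> (x, y) / x ^ 4"
    unfolding pdx_def[of "pdx f"] by (simp add: DERIV_imp_deriv)
  have "((\<lambda>s. pdy \<phi> (x, s) / x ^ 2) has_real_derivative (pdy (pdy \<phi>) (x, y) / x ^ 2)) (at y)"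
    using DERIV_cdivide[OF C2_derivs(4)[OF C x, of y], of "x ^ 2"] by simp
  then have "((\<lambda>s. pdy f (x, s)) has_real_derivative (pdy (pdy \<phi>) (x, y) / x ^ 2)) (at y)"
    using B by simp
  then show "pdy (pdy f) (x, y) = pdy (pdy \<phi>) (x, y) / x ^ 2"
    unfolding pdy_def[of "pdy f"] by (simp add: DERIV_imp_deriv)
qed




lemma dist_rho: "dist z q = sqrt ((fst z - fst q)^2 + (snd z - snd q)^2)"
  by (cases z, cases q) (simp add: dist_Pair_Pair dist_real_def)

lemma dist_shrink:
  fixes a b y y' :: real
  assumes "0 \<le> a" "a \<le> b"
  shows "dist (a, y') (0, y) \<le> dist (b, y') (0, y)"
proof -
  have "a^2 \<le> b^2" using assms by (intro power_mono) auto
  then show ?thesis by (simp add: dist_rho)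
qed

lemma f_cont:
  fixes \<phi> G :: "real \<times> real \<Rightarrow> real"
  assumes cphi: "continuous_on H2bar \<phi>" and cG: "continuous_on H2bar G"
    and mvt: "\<And>x y. x > 0 \<Longrightarrow> \<exists>\<xi>. 0 < \<xi> \<and> \<xi> < x \<and> \<phi> (x, y) / x^2 = G (\<xi>, y) / 2"
  shows "continuous_on H2bar (\<lambda>p. if fst p > 0 then \<phi> p / (fst p)^2 else G p / 2)"
    (is "continuous_on _ ?f")
  unfolding continuous_on_iff
proof (intro ballI allI impI)
  fix p e assume pH: "p \<in> H2bar" and e: "(e::real) > 0"
  show "\<exists>d>0. \<forall>p'\<in>H2bar. dist p' p < d \<longrightarrow> dist (?f p') (?f p) < e"
  proof (cases "fst p > 0")
    case True
    have "continuous_on H2 (\<lambda>p. \<phi> p / (fst p)^2)"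
      by (intro continuous_intros continuous_on_subset[OF cphi]) (auto simp: H2_def H2bar_def)
    then obtain d1 where d1: "d1 > 0" "\<And>p'. p' \<in> H2 \<Longrightarrow> dist p' p < d1 \<Longrightarrow>
        dist (\<phi> p' / (fst p')^2) (\<phi> p / (fst p)^2) < e"
      using e True unfolding continuous_on_iff H2_def by fastforce
    show ?thesis
    proof (intro exI[of _ "min d1 (fst p)"] conjI ballI impI)
      show "min d1 (fst p) > 0" using d1 True by simp
      fix p' assume "p' \<in> H2bar" "dist p' p < min d1 (fst p)"
      moreover have "\<bar>fst p' - fst p\<bar> \<le> dist p' p" by (metis dist_fst_le dist_real_def)
      ultimately have "fst p' > 0" "dist p' p < d1" by auto
      then show "dist (?f p') (?f p) < e" using d1(2)[of p'] True by (simp add: H2_def)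
    qed
  next
    case False
    then have p0: "fst p = 0" using pH by (simp add: H2bar_def)
    obtain y where py: "p = (0, y)" using p0 by (metis prod.collapse)
    obtain d where d: "d > 0" "\<And>p'. p' \<in> H2bar \<Longrightarrow> dist p' p < d \<Longrightarrow> dist (G p') (G p) < e"
      using cG e pH unfolding continuous_on_iff by blast
    show ?thesis
    proof (intro exI[of _ d] conjI ballI impI)
      show "d > 0" by (rule d)
      fix p' assume p'H: "p' \<in> H2bar" and dp': "dist p' p < d"
      obtain x' y' where p': "p' = (x', y')" by fastforce
      show "dist (?f p') (?f p) < e"
      proof (cases "x' > 0")
        case True
        obtain \<xi> where xi: "0 < \<xi>" "\<xi> < x'" "\<phi> (x', y') / x'^2 = G (\<xi>, y') / 2"
          using mvt[OF True] by blast
        have "dist (\<xi>, y') p \<le> dist p' p" unfolding py p' using xi by (intro dist_shrink) auto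
        then have "dist (G (\<xi>, y')) (G p) < e" using dp' xi by (intro d(2)) (auto simp: H2bar_def)
        moreover have "?f p' = G (\<xi>, y') / 2" using True xi p' by simp
        moreover have "?f p = G p / 2" using p0 by simp
        ultimately show ?thesis using e by (simp add: dist_real_def)
      next
        case False
        then have "\<not> fst p' > 0" using p' by simp
        then show ?thesis using d(2)[OF p'H dp'] p0 e by (simp add: dist_real_def)
      qed
    qed
  qed
qed




lemma gauss_d1:
  fixes a b c \<alpha> E t :: real
  shows "((\<lambda>t. c * (exp (- \<alpha> * ((t - a)^2 + b)) - E)) has_real_derivative
          (-2 * \<alpha> * c * (t - a) * exp (- \<alpha> * ((t - a)^2 + b)))) (at t)"
  by (auto intro!: derivative_eq_intros simp: algebra_simps)

lemma gauss_d2: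
  fixes a b c \<alpha> t :: real
  shows "((\<lambda>t. -2 * \<alpha> * c * (t - a) * exp (- \<alpha> * ((t - a)^2 + b))) has_real_derivative
          (c * exp (- \<alpha> * ((t - a)^2 + b)) * (4 * \<alpha>^2 * (t - a)^2 - 2 * \<alpha>))) (at t)"
  by (auto intro!: derivative_eq_intros simp: algebra_simps power2_eq_square)

lemma barrier_compare:
  fixes f :: "real \<times> real \<Rightarrow> real" and q :: "real \<times> real"
  assumes cf: "continuous_on H2bar f" and C2f: "Ck_on 2 H2 f"
    and pde: "\<forall>p\<in>H2. pdx (pdx f) p + pdy (pdy f) p + 3 * pdx f p / fst p = 0"
    and fnn: "\<forall>p\<in>H2. f p \<ge> 0"
    and qx: "fst q > 0" and r: "r > 0" and m: "m > 0"
    and near: "\<And>z. (fst z - fst q)^2 + (snd z - snd q)^2 \<le> r^2 \<Longrightarrow> f z \<ge> m"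
    and S: "S > r^2"
    and z: "fst z > 0" "r^2 \<le> (fst z - fst q)^2 + (snd z - snd q)^2"
           "(fst z - fst q)^2 + (snd z - snd q)^2 \<le> S"
  shows "f z \<ge> m / (exp (- (3 / r^2) * r^2) - exp (- (3 / r^2) * S)) *
                (exp (- (3 / r^2) * ((fst z - fst q)^2 + (snd z - snd q)^2)) - exp (- (3 / r^2) * S))"
proof -
  define \<alpha> where "\<alpha> = 3 / r^2"
  define \<rho> where "\<rho> z = (fst z - fst q)^2 + (snd z - snd q)^2" for z
  define E where "E = exp (- \<alpha> * S)"
  define c where "c = m / (exp (- \<alpha> * r^2) - E)"
  define w where "w z = c * (exp (- \<alpha> * \<rho> z) - E)" for z
  define ex where "ex z = exp (- \<alpha> * \<rho> z)" for z
  define wx where "wx z = -2 * \<alpha> * c * (fst z - fst q) * ex z" for z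
  define wxx where "wxx z = c * ex z * (4 * \<alpha>^2 * (fst z - fst q)^2 - 2 * \<alpha>)" for z
  define wy where "wy z = -2 * \<alpha> * c * (snd z - snd q) * ex z" for z
  define wyy where "wyy z = c * ex z * (4 * \<alpha>^2 * (snd z - snd q)^2 - 2 * \<alpha>)" for z
  have \<alpha>: "\<alpha> > 0" "\<alpha> * r^2 = 3" using r by (auto simp: \<alpha>_def)
  have "\<alpha> * r^2 < \<alpha> * S" using \<alpha>(1) S by (intro mult_strict_left_mono)
  then have "exp (- \<alpha> * r^2) > E" by (simp add: E_def)
  then have c: "c > 0" using m by (simp add: c_def)
  define K where "K = {z. 0 \<le> fst z \<and> r^2 \<le> \<rho> z \<and> \<rho> z \<le> S}"
  have contrho: "continuous_on UNIV \<rho>" unfolding \<rho>_def by (intro continuous_intros)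
  have cK: "compact K"
  proof -
    have "closed K" unfolding K_def \<rho>_def
      by (intro closed_Collect_conj closed_Collect_le continuous_intros)
    moreover have "K \<subseteq> cball q (sqrt S)"
      by (auto simp: K_def \<rho>_def dist_rho power2_commute)
    then have "bounded K" using bounded_cball bounded_subset by blast
    ultimately show ?thesis by (simp add: compact_eq_bounded_closed)
  qed
  define Op where "Op = {z. 0 < fst z \<and> r^2 < \<rho> z \<and> \<rho> z < S}"
  have "open Op" unfolding Op_def \<rho>_def
    by (intro open_Collect_conj open_Collect_less continuous_intros)
  moreover have "Op \<subseteq> K" by (auto simp: Op_def K_def)
  ultimately have OK: "Op \<subseteq> interior K" by (intro interior_maximal)
  have KH: "K \<subseteq> H2bar" by (auto simp: K_def H2bar_def)
  have wr: "w z = m" if "\<rho> z = r^2" for z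
    using that \<open>exp (- \<alpha> * r^2) > E\<close> by (simp add: w_def c_def)
  have wS: "w z = 0" if "\<rho> z = S" for z
    using that by (simp add: w_def E_def)
  have wdx: "((\<lambda>t. w (t, y)) has_real_derivative wx (x, y)) (at x)"
    and wdxx: "((\<lambda>t. wx (t, y)) has_real_derivative wxx (x, y)) (at x)" for x y
  proof -
    have "(\<lambda>t. w (t, y)) = (\<lambda>t. c * (exp (- \<alpha> * ((t - fst q)^2 + (y - snd q)^2)) - E))"
      by (simp add: w_def \<rho>_def)
    then show "((\<lambda>t. w (t, y)) has_real_derivative wx (x, y)) (at x)"
      using gauss_d1[of c \<alpha> "fst q" "(y - snd q)^2" E x] by (simp add: wx_def ex_def \<rho>_def)
    have "(\<lambda>t. wx (t, y)) = (\<lambda>t. -2 * \<alpha> * c * (t - fst q) * exp (- \<alpha> * ((t - fst q)^2 + (y - snd q)^2)))"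
      by (simp add: wx_def ex_def \<rho>_def)
    then show "((\<lambda>t. wx (t, y)) has_real_derivative wxx (x, y)) (at x)"
      using gauss_d2[of \<alpha> c "fst q" "(y - snd q)^2" x] by (simp add: wxx_def ex_def \<rho>_def)
  qed
  have wdy: "((\<lambda>t. w (x, t)) has_real_derivative wy (x, y)) (at y)"
    and wdyy: "((\<lambda>t. wy (x, t)) has_real_derivative wyy (x, y)) (at y)" for x y
  proof -
    have "(\<lambda>t. w (x, t)) = (\<lambda>t. c * (exp (- \<alpha> * ((t - snd q)^2 + (x - fst q)^2)) - E))"
      by (simp add: w_def \<rho>_def add.commute)
    then show "((\<lambda>t. w (x, t)) has_real_derivative wy (x, y)) (at y)"
      using gauss_d1[of c \<alpha> "snd q" "(x - fst q)^2" E y] by (simp add: wy_def ex_def \<rho>_def add.commute)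
    have "(\<lambda>t. wy (x, t)) = (\<lambda>t. -2 * \<alpha> * c * (t - snd q) * exp (- \<alpha> * ((t - snd q)^2 + (x - fst q)^2)))"
      by (simp add: wy_def ex_def \<rho>_def add.commute)
    then show "((\<lambda>t. wy (x, t)) has_real_derivative wyy (x, y)) (at y)"
      using gauss_d2[of \<alpha> c "snd q" "(x - fst q)^2" y] by (simp add: wyy_def ex_def \<rho>_def add.commute)
  qed
  have Lw: "wxx p + wyy p + 3 * wx p / fst p > 0" if "fst p > 0" "\<rho> p \<ge> r^2" for p
  proof -
    define dx where "dx = fst p - fst q"
    define dy where "dy = snd p - snd q"
    have rho: "\<rho> p = dx^2 + dy^2" by (simp add: \<rho>_def dx_def dy_def)
    have ce: "c * ex p > 0" using c by (simp add: ex_def)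
    have eq: "wxx p + wyy p + 3 * wx p / fst p
        = c * ex p * (4 * \<alpha>^2 * \<rho> p - 4 * \<alpha> - 6 * \<alpha> * (dx / fst p))"
      using that(1) unfolding wxx_def wyy_def wx_def rho dx_def[symmetric] dy_def[symmetric]
      by (simp add: field_simps)
    have "dx / fst p < 1" using that(1) qx by (simp add: dx_def divide_less_eq)
    then have 1: "\<alpha> * (dx / fst p) < \<alpha>" using mult_strict_left_mono[OF _ \<alpha>(1)] by fastforce
    have "\<alpha>^2 * \<rho> p \<ge> \<alpha>^2 * r^2" using that(2) by (intro mult_left_mono) auto
    also have "\<alpha>^2 * r^2 = 3 * \<alpha>" using \<alpha>(2) by (simp add: power2_eq_square algebra_simps)
    finally have 2: "\<alpha>^2 * \<rho> p \<ge> 3 * \<alpha>" .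
    have "4 * \<alpha>^2 * \<rho> p - 4 * \<alpha> - 6 * \<alpha> * (dx / fst p) > 0" using 1 2 \<alpha> by linarith
    then show ?thesis unfolding eq using ce by simp
  qed
  have main: "f z - w z \<ge> 0"
  proof (rule minprinc[where g = "\<lambda>z. f z - w z" and gx = "\<lambda>z. pdx f z - wx z"
        and gxx = "\<lambda>z. pdx (pdx f) z - wxx z" and gy = "\<lambda>z. pdy f z - wy z"
        and gyy = "\<lambda>z. pdy (pdy f) z - wyy z" and K = K])
    show "compact K" by (rule cK)
    show "continuous_on K (\<lambda>z. f z - w z)" unfolding w_def \<rho>_def
      by (intro continuous_intros continuous_on_subset[OF cf KH])
    show "z \<in> K" using z by (auto simp: K_def \<rho>_def)
    show "fst z > 0" by (rule z)
  next
    fix p assume pK: "p \<in> K" and px: "fst p > 0" and pn: "p \<notin> interior K"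
    then have "p \<notin> Op" using OK by auto
    then have "\<rho> p = r^2 \<or> \<rho> p = S" using pK px by (auto simp: Op_def K_def)
    then show "f p - w p \<ge> 0"
    proof
      assume "\<rho> p = r^2"
      then show ?thesis using near[of p] wr by (simp add: \<rho>_def)
    next
      assume "\<rho> p = S"
      moreover have "p \<in> H2" using px by (simp add: H2_def)
      ultimately show ?thesis using wS fnn by simp
    qed
  next
    fix p assume pI: "p \<in> interior K" and px: "fst p > 0"
    obtain x y where pxy: "p = (x, y)" by fastforce
    have x: "x > 0" using px pxy by simp
    have rp: "\<rho> p \<ge> r^2" using pI interior_subset by (auto simp: K_def)
    have Lf: "pdx (pdx f) p + pdy (pdy f) p + 3 * pdx f p / fst p = 0"
    proof -
      have "p \<in> H2" using px by (simp add: H2_def)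
      then show ?thesis using pde by blast
    qed
    show "((\<lambda>t. f (t, snd p) - w (t, snd p)) has_real_derivative pdx f p - wx p) (at (fst p)) \<and>
        ((\<lambda>t. pdx f (t, snd p) - wx (t, snd p)) has_real_derivative pdx (pdx f) p - wxx p) (at (fst p)) \<and>
        ((\<lambda>t. f (fst p, t) - w (fst p, t)) has_real_derivative pdy f p - wy p) (at (snd p)) \<and>
        ((\<lambda>t. pdy f (fst p, t) - wy (fst p, t)) has_real_derivative pdy (pdy f) p - wyy p) (at (snd p)) \<and>
        (pdx (pdx f) p - wxx p) + (pdy (pdy f) p - wyy p) + 3 * (pdx f p - wx p) / fst p < 0"
      unfolding pxy fst_conv snd_conv
    proof (intro conjI)
      show "((\<lambda>t. f (t, y) - w (t, y)) has_real_derivative pdx f (x, y) - wx (x, y)) (at x)"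
        by (rule DERIV_diff[OF C2_derivs(1)[OF C2f x] wdx])
      show "((\<lambda>t. pdx f (t, y) - wx (t, y)) has_real_derivative pdx (pdx f) (x, y) - wxx (x, y)) (at x)"
        by (rule DERIV_diff[OF C2_derivs(2)[OF C2f x] wdxx])
      show "((\<lambda>t. f (x, t) - w (x, t)) has_real_derivative pdy f (x, y) - wy (x, y)) (at y)"
        by (rule DERIV_diff[OF C2_derivs(3)[OF C2f x] wdy])
      show "((\<lambda>t. pdy f (x, t) - wy (x, t)) has_real_derivative pdy (pdy f) (x, y) - wyy (x, y)) (at y)"
        by (rule DERIV_diff[OF C2_derivs(4)[OF C2f x] wdyy])
      have "wxx p + wyy p + 3 * wx p / fst p > 0" using Lw[OF px rp] .
      then show "pdx (pdx f) (x, y) - wxx (x, y) + (pdy (pdy f) (x, y) - wyy (x, y)) +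
          3 * (pdx f (x, y) - wx (x, y)) / x < 0"
        using Lf unfolding pxy by (simp add: diff_divide_distrib)
    qed
  qed
  then show ?thesis by (simp add: w_def \<rho>_def c_def E_def \<alpha>_def)
qed




theorem lemma4p1:
  fixes \<phi> :: "real \<times> real \<Rightarrow> real"
  assumes C2: "Ck_closure 2 H2 \<phi>"
    and smooth: "Cinf_on H2 \<phi>"
    and nonneg: "\<forall>p\<in>H2bar. \<phi> p \<ge> 0"
    and nonzero: "\<exists>p\<in>H2bar. \<phi> p \<noteq> 0"
    and bdry: "\<forall>y. \<phi> (0, y) = 0"
    and pde: "\<forall>p\<in>H2. pdx (pdx \<phi>) p + pdy (pdy \<phi>) p - pdx \<phi> p / fst p = 0"
  shows "\<exists>f. continuous_on H2bar f \<and> Cinf_on H2 f \<and>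
             (\<forall>p\<in>H2. f p = \<phi> p / (fst p)\<^sup>2) \<and>
             (\<forall>p\<in>H2. pdx (pdx f) p + pdy (pdy f) p + 3 * pdx f p / fst p = 0) \<and>
             (\<forall>p\<in>H2bar. f p > 0)"
proof -
  have C2on: "Ck_on 2 H2 \<phi>" and cphi: "continuous_on H2bar \<phi>"
    and ext: "\<And>ds. length ds \<le> 2 \<Longrightarrow> (\<exists>g. continuous_on H2bar g \<and> (\<forall>p\<in>H2. g p = iterpd ds \<phi> p))"
    using C2 unfolding Ck_closure_def closure_H2 by auto
  obtain G20 where G20: "continuous_on H2bar G20" "\<forall>p\<in>H2. G20 p = pdx (pdx \<phi>) p"
    using ext[of "[True, True]"] by auto
  obtain G02 where G02: "continuous_on H2bar G02" "\<forall>p\<in>H2. G02 p = pdy (pdy \<phi>) p"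
    using ext[of "[False, False]"] by auto
  define G where "G p = G20 p + G02 p" for p
  have cG: "continuous_on H2bar G" unfolding G_def[abs_def]
    by (intro continuous_on_add G20(1) G02(1))
  have GH: "pdx \<phi> p = fst p * G p" if "p \<in> H2" for p
  proof -
    have "fst p > 0" using that by (simp add: H2_def)
    moreover have "G p = pdx \<phi> p / fst p" using that pde G20(2) G02(2) by (auto simp: G_def)
    ultimately show ?thesis by simp
  qed
  have mvt: "\<exists>\<xi>. 0 < \<xi> \<and> \<xi> < x \<and> \<phi> (x, y) / x^2 = G (\<xi>, y) / 2" if x: "x > 0" for x y
  proof -
    define h where "h t = \<phi> (t, y) * x^2 - t^2 * \<phi> (x, y)" for t
    have ch: "continuous_on {0..x} h"
    proof -
      have "continuous_on {0..x} (\<lambda>t. \<phi> (t, y))"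
        by (rule continuous_on_compose2[OF cphi, of _ "\<lambda>t. (t, y)"])
           (auto intro!: continuous_intros simp: H2bar_def)
      then show ?thesis unfolding h_def[abs_def] by (intro continuous_intros)
    qed
    have dh: "(h has_real_derivative (pdx \<phi> (t, y) * x^2 - 2 * t * \<phi> (x, y))) (at t)" if "t > 0" for t
      using C2_derivs(1)[OF C2on that, of y] unfolding h_def[abs_def]
      by (auto intro!: derivative_eq_intros)
    have "\<And>t. 0 < t \<Longrightarrow> t < x \<Longrightarrow> h differentiable (at t)"
      using dh real_differentiable_def by blast
    from MVT[OF x ch this] obtain l z where z: "0 < z" "z < x" "DERIV h z :> l" "h x - h 0 = (x - 0) * l"
      by blast
    have "h x = 0" "h 0 = 0" using bdry by (auto simp: h_def)
    then have "l = 0" using z(4) x by simp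
    moreover have "l = pdx \<phi> (z, y) * x^2 - 2 * z * \<phi> (x, y)"
      by (rule DERIV_unique[OF z(3) dh[OF z(1)]])
    moreover have "pdx \<phi> (z, y) = z * G (z, y)" using GH[of "(z, y)"] z(1) by (simp add: H2_def)
    ultimately have "z * (G (z, y) * x^2 - 2 * \<phi> (x, y)) = 0" by (simp add: algebra_simps)
    then have "G (z, y) * x^2 = 2 * \<phi> (x, y)" using z(1) by simp
    then have "\<phi> (x, y) / x^2 = G (z, y) / 2" using x by (simp add: field_simps)
    then show ?thesis using z(1,2) by blast
  qed
  define f where "f p = (if fst p > 0 then \<phi> p / (fst p)^2 else G p / 2)" for p
  have "continuous_on H2bar (\<lambda>p. if fst p > 0 then \<phi> p / (fst p)^2 else G p / 2)"
    by (rule f_cont[OF cphi cG mvt])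
  then have cf: "continuous_on H2bar f" by (simp add: f_def[abs_def])
  have fe: "\<forall>p\<in>H2. f p = \<phi> p / (fst p)^2" by (simp add: f_def H2_def)
  have cinf: "Cinf_on H2 f" unfolding Cinf_on_def
  proof
    fix k
    have "Ck_on k H2 (\<lambda>p. \<phi> p * (1 / (fst p)^2))"
      by (rule Ck_mult[OF open_H2]) (use smooth Ck_invpow in \<open>auto simp: Cinf_on_def\<close>)
    moreover have "\<forall>p\<in>H2. f p = \<phi> p * (1 / (fst p)^2)" using fe by simp
    ultimately show "Ck_on k H2 f"
      using Ck_cong[OF open_H2, of f "\<lambda>p. \<phi> p * (1 / (fst p)^2)" k] by simp
  qed
  have C2f: "Ck_on 2 H2 f" using cinf unfolding Cinf_on_def by blast
  have pdef: "\<forall>p\<in>H2. pdx (pdx f) p + pdy (pdy f) p + 3 * pdx f p / fst p = 0"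
  proof
    fix p assume pH: "p \<in> H2"
    obtain x y where pxy: "p = (x, y)" by fastforce
    have x: "x > 0" using pH pxy by (simp add: H2_def)
    have e: "pdx (pdx \<phi>) (x, y) + pdy (pdy \<phi>) (x, y) - pdx \<phi> (x, y) / x = 0"
      using pde pH pxy by auto
    have "pdx (pdx f) p + pdy (pdy f) p + 3 * pdx f p / fst p
       = (pdx (pdx \<phi>) (x, y) + pdy (pdy \<phi>) (x, y) - pdx \<phi> (x, y) / x) / x^2"
      unfolding pxy fst_conv f_derivs[OF C2on fe x] using x
      by (simp add: field_simps eval_nat_numeral)
    then show "pdx (pdx f) p + pdy (pdy f) p + 3 * pdx f p / fst p = 0" using e by simp
  qed
  have fnn: "\<forall>p\<in>H2. f p \<ge> 0"
    using nonneg fe by (auto simp: H2_def H2bar_def)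
  obtain q where q: "q \<in> H2bar" "\<phi> q \<noteq> 0" using nonzero by blast
  have qx: "fst q > 0"
  proof (rule ccontr)
    assume "\<not> fst q > 0"
    then have "fst q = 0" using q(1) by (simp add: H2bar_def)
    then have "q = (0, snd q)" by (metis prod.collapse)
    then show False using q(2) bdry by metis
  qed
  have "\<phi> q > 0" using q nonneg by force
  then have fq: "f q > 0" using qx by (simp add: f_def)
  obtain r0 where r0: "r0 > 0" "\<And>z. z \<in> H2bar \<Longrightarrow> dist z q < r0 \<Longrightarrow> dist (f z) (f q) < f q / 2"
    using cf q(1) fq unfolding continuous_on_iff by (metis half_gt_zero)
  define m where "m = f q / 2"
  define r where "r = min r0 (fst q) / 2"
  have m: "m > 0" using fq by (simp add: m_def)
  have r: "r > 0" "r < r0" "r \<le> fst q / 2" using r0 qx by (auto simp: r_def)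
  define \<rho> where "\<rho> z = (fst z - fst q)^2 + (snd z - snd q)^2" for z
  have near: "f z \<ge> m" if "(fst z - fst q)^2 + (snd z - snd q)^2 \<le> r^2" for z
  proof -
    have "dist z q \<le> r" unfolding dist_rho using that r
      by (metis abs_of_pos real_sqrt_abs real_sqrt_le_mono)
    moreover have "\<bar>fst z - fst q\<bar> \<le> dist z q" by (metis dist_fst_le dist_real_def)
    ultimately have "fst z > 0" "dist z q < r0" using r by auto
    then have "dist (f z) (f q) < f q / 2" using r0(2)[of z] by (simp add: H2bar_def)
    then show ?thesis unfolding m_def dist_real_def by linarith
  qed
  define \<alpha> where "\<alpha> = 3 / r^2"
  have \<alpha>: "\<alpha> > 0" using r by (simp add: \<alpha>_def)
  have Wpos: "m / (exp (- \<alpha> * r^2) - exp (- \<alpha> * S)) * (exp (- \<alpha> * t) - exp (- \<alpha> * S)) > 0"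
    if "r^2 < S" "t < S" for S t
  proof -
    have "exp (- \<alpha> * r^2) - exp (- \<alpha> * S) > 0" using that \<alpha> by (simp add: mult_strict_left_mono)
    moreover have "exp (- \<alpha> * t) - exp (- \<alpha> * S) > 0" using that \<alpha> by (simp add: mult_strict_left_mono)
    ultimately show ?thesis using m by simp
  qed
  have comp: "f z \<ge> m / (exp (- \<alpha> * r^2) - exp (- \<alpha> * S)) * (exp (- \<alpha> * \<rho> z) - exp (- \<alpha> * S))"
    if "S > r^2" "fst z > 0" "r^2 \<le> \<rho> z" "\<rho> z \<le> S" for S z
    using barrier_compare[OF cf C2f pdef fnn qx r(1) m near that(1), of z] that
    unfolding \<alpha>_def \<rho>_def by simp
  have "f p > 0" if pH: "p \<in> H2bar" for p
  proof (cases "fst p > 0")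
    case True
    show ?thesis
    proof (cases "\<rho> p \<le> r^2")
      case True
      then show ?thesis using near[of p] m by (simp add: \<rho>_def)
    next
      case False
      define S where "S = \<rho> p + 1"
      have "S > r^2" "\<rho> p < S" using False by (auto simp: S_def)
      then show ?thesis using comp[of S p] Wpos[of S "\<rho> p"] \<open>fst p > 0\<close> False by fastforce
    qed
  next
    case False
    then have p0: "fst p = 0" using pH by (simp add: H2bar_def)
    define S where "S = \<rho> p + 1"
    define W where "W z = m / (exp (- \<alpha> * r^2) - exp (- \<alpha> * S)) * (exp (- \<alpha> * \<rho> z) - exp (- \<alpha> * S))" for z
    have rqx: "r^2 < (fst q)^2"
    proof -
      have "r < fst q" using r qx by simp
      then show ?thesis using r(1) by (intro power_strict_mono) auto
    qed
    have "\<rho> p \<ge> (fst q)^2" using p0 by (simp add: \<rho>_def)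
    then have S: "S > r^2" "\<rho> p < S" using rqx by (auto simp: S_def)
    define T where "T = {z. fst z > 0 \<and> r^2 \<le> \<rho> z \<and> \<rho> z \<le> S}"
    have Tge: "\<And>z. z \<in> T \<Longrightarrow> f z - W z \<ge> 0" using comp S(1) by (auto simp: T_def W_def)
    have clT: "closure T \<subseteq> H2bar"
      by (rule closure_minimal) (auto simp: T_def H2bar_def intro!: closed_Collect_le continuous_intros)
    have cW: "continuous_on (closure T) (\<lambda>z. f z - W z)"
      unfolding W_def[abs_def] \<rho>_def
      by (intro continuous_intros continuous_on_subset[OF cf clT])
    define s where "s n = (fst q / 2 * inverse (real (Suc n)), snd p)" for n
    have sT: "s n \<in> T" for n
    proof -
      define t where "t = fst q / 2 * inverse (real (Suc n))"
      have inv: "0 < inverse (real (Suc n))" "inverse (real (Suc n)) \<le> 1"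
        by (auto simp: field_simps)
      have t: "0 < t" "t \<le> fst q / 2" using qx inv
        by (auto simp: t_def intro: mult_left_le[of _ "fst q / 2", simplified])
      have "r^2 \<le> (fst q - t)^2" using r t by (intro power_mono) auto
      moreover have "(fst q - t)^2 \<le> (fst q)^2" using t qx by (intro power_mono) auto
      ultimately have "r^2 \<le> (t - fst q)^2" "(t - fst q)^2 \<le> (fst q)^2"
        by (simp_all add: power2_commute)
      moreover have "\<rho> p = (fst q)^2 + (snd p - snd q)^2" using p0 by (simp add: \<rho>_def)
      moreover have "s n = (t, snd p)" by (simp add: s_def t_def)
      moreover have "(snd p - snd q)^2 \<ge> 0" by simp
      ultimately show ?thesis using t S unfolding T_def \<rho>_def by (simp add: S_def) (metis add_increasing2 zero_le_power2)
    qed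
    have "(\<lambda>n. fst q / 2 * inverse (real (Suc n))) \<longlonglongrightarrow> fst q / 2 * 0"
      by (intro tendsto_mult tendsto_const LIMSEQ_inverse_real_of_nat)
    then have "s \<longlonglongrightarrow> (0, snd p)" unfolding s_def by (intro tendsto_Pair) auto
    moreover have "p = (0, snd p)" using p0 by (metis prod.collapse)
    ultimately have "p \<in> closure T" using sT unfolding closure_sequential by metis
    then have "f p - W p \<ge> 0" by (rule continuous_ge_on_closure[OF cW _ Tge])
    moreover have "W p > 0" unfolding W_def using Wpos[OF S] .
    ultimately show ?thesis by simp
  qed
  then show ?thesis using cf cinf fe pdef by blast
qed


end
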